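(* Let $\Omega:S^1\to\mathbb{R}$ be of class $C^{m-1}(S^1)$ for some integer $m\ge2$, such that $\Omega'(\theta)+1>0$ for all $\theta$. Then there exist constants $\epsilon_0>0$ and $\mu>0$ such that whenever $0<\epsilon<\epsilon_0$, \[ \left|e^{-iE_m\Omega(r,\theta)}\right|\le r^{1-\mu}\quad\text{for all }\theta\text{ and }1\le r\le2^\epsilon, \qquad \left|e^{iE_m\Omega(r,\theta)}\right|\le r^{\mu-1}\quad\text{for all }\theta\text{ and }2^{-\epsilon}\le r\le1. \]
   Context: For a $C^{m-1}$ function $f$ on the circle, $E_mf(r,\theta)=\sum_{p=0}^{m-1}\frac{f^{(p)}(\theta)}{p!}(-i\log r)^p$ for $r>0$, $\theta\in S^1$. *)

theory Defs
  imports "HOL-Analysis.Analysis"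
begin

text \<open>Functions on the circle are identified with 2pi-periodic functions on the reals;
  the angle theta is a real number.\<close>

definition circle_fun :: "(real \<Rightarrow> 'a) \<Rightarrow> bool" where
  "circle_fun f \<longleftrightarrow> (\<forall>\<theta>. f (\<theta> + 2 * pi) = f \<theta>)"

definition C_k :: "nat \<Rightarrow> (real \<Rightarrow> real) \<Rightarrow> bool" where
  "C_k k f \<longleftrightarrow> (\<forall>j<k. \<forall>x. (deriv ^^ j) f differentiable (at x))
                 \<and> continuous_on UNIV ((deriv ^^ k) f)"

definition E :: "nat \<Rightarrow> (real \<Rightarrow> real) \<Rightarrow> real \<Rightarrow> real \<Rightarrow> complex" where
  "E m f r \<theta> = (\<Sum>p<m. complex_of_real ((deriv ^^ p) f \<theta> / fact p) * (- \<i> * complex_of_real (ln r)) ^ p)"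

end

theory Submission
  imports Defs
begin

lemma periodic_nat:
  assumes "\<forall>x. g (x + c) = (g x :: real)"
  shows "g (y + real n * c) = g y"
proof (induction n)
  case 0 then show ?case by simp
next
  case (Suc n)
  have "g (y + real (Suc n) * c) = g ((y + real n * c) + c)" by (simp add: algebra_simps)
  also have "\<dots> = g (y + real n * c)" using assms by blast
  finally show ?case using Suc by simp
qed

lemma periodic_reduce:
  assumes "\<forall>x. g (x + 2*pi) = (g x :: real)"
  shows "\<exists>y\<in>{0..2*pi}. g x = g y"
proof -
  define k where "k = \<lfloor>x / (2*pi)\<rfloor>"
  define y where "y = x - of_int k * (2*pi)"
  have "of_int k \<le> x / (2*pi)" "x / (2*pi) < of_int k + 1" unfolding k_def by linarith+
  then have "of_int k * (2*pi) \<le> x" "x < (of_int k + 1) * (2*pi)"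
    using pi_gt_zero by (simp_all add: field_simps)
  then have y: "y \<in> {0..2*pi}" unfolding y_def by (auto simp: algebra_simps)
  have "g x = g y"
  proof (cases "k \<ge> 0")
    case True
    then obtain n where "k = int n" using nonneg_int_cases by blast
    then have "x = y + real n * (2*pi)" unfolding y_def by simp
    then show ?thesis using periodic_nat[OF assms] by simp
  next
    case False
    then have "k = - int (nat (- k))" by simp
    then obtain n where "k = - int n" by blast
    then have "y = x + real n * (2*pi)" unfolding y_def by simp
    then show ?thesis using periodic_nat[OF assms] by simp
  qed
  with y show ?thesis by blast
qed

lemma deriv_periodic:
  assumes "\<forall>x. g (x + c) = (g x :: real)"
  shows "deriv g (x + c) = deriv g x"
proof -
  have e: "(\<lambda>x. g (x + c)) = g" using assms by auto
  have "\<And>D. (g has_field_derivative D) (at (x + c)) = (g has_field_derivative D) (at x)"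
    using DERIV_shift[of g _ x c] e by simp
  then show ?thesis unfolding deriv_def by simp
qed

lemma derivs_periodic:
  assumes "\<forall>x. g (x + c) = (g x :: real)"
  shows "\<forall>x. (deriv ^^ p) g (x + c) = (deriv ^^ p) g x"
proof (induction p)
  case 0 then show ?case using assms by simp
next
  case (Suc p)
  then show ?case using deriv_periodic[of "(deriv ^^ p) g" c] by simp
qed

lemma periodic_bounded:
  assumes "\<forall>x. g (x + 2*pi) = (g x :: real)" and "continuous_on UNIV g"
  shows "\<exists>b\<ge>0. \<forall>x. \<bar>g x\<bar> \<le> b"
proof -
  have "compact (g ` {0..2*pi})"
    using assms(2) by (intro compact_continuous_image) (auto intro: continuous_on_subset)
  then have "bounded (g ` {0..2*pi})" by (rule compact_imp_bounded)
  then obtain b where b: "\<forall>y\<in>g ` {0..2*pi}. \<bar>y\<bar> \<le> b" by (auto simp: bounded_real)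
  have "\<forall>x. \<bar>g x\<bar> \<le> b"
  proof
    fix x
    obtain y where "y \<in> {0..2*pi}" "g x = g y" using periodic_reduce[OF assms(1)] by blast
    then show "\<bar>g x\<bar> \<le> b" using b by auto
  qed
  moreover have "\<bar>g 0\<bar> \<le> b" using b by simp
  then have "b \<ge> 0" using abs_ge_zero[of "g 0"] by linarith
  ultimately show ?thesis by blast
qed

lemma periodic_min:
  assumes "\<forall>x. g (x + 2*pi) = (g x :: real)" and "continuous_on UNIV g"
  shows "\<exists>x0. \<forall>x. g x0 \<le> g x"
proof -
  obtain x0 where x0: "x0 \<in> {0..2*pi}" "\<forall>y\<in>{0..2*pi}. g x0 \<le> g y"
  proof -
    have "continuous_on {0..2*pi} g" using assms(2) by (rule continuous_on_subset) simp
    then show ?thesis using continuous_attains_inf[of "{0..2*pi}" g] pi_gt_zero that by auto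
  qed
  show ?thesis
  proof (intro exI allI)
    fix x
    obtain y where "y \<in> {0..2*pi}" "g x = g y" using periodic_reduce[OF assms(1)] by blast
    then show "g x0 \<le> g x" using x0 by auto
  qed
qed

lemma key_estimate:
  fixes \<Omega> :: "real \<Rightarrow> real" and L B \<eta> :: real
  assumes B: "\<forall>p<m. \<forall>\<theta>. \<bar>(deriv ^^ p) \<Omega> \<theta>\<bar> \<le> B" and "m \<ge> 2"
    and L: "\<bar>L\<bar> \<le> \<eta>" "\<eta> \<le> 1" and r: "r > 0" "ln r = L"
  shows "\<bar>Im (E m \<Omega> r \<theta>) + deriv \<Omega> \<theta> * L\<bar> \<le> real m * B * \<eta> * \<bar>L\<bar>"
proof -
  define t where "t p = complex_of_real ((deriv ^^ p) \<Omega> \<theta> / fact p) * (- \<i> * complex_of_real L) ^ p" for p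
  have E: "E m \<Omega> r \<theta> = (\<Sum>p<m. t p)" unfolding E_def t_def using r by simp
  have split: "{..<m} = {..<2} \<union> {2..<m}" using assms(2) by auto
  have "(\<Sum>p<m. t p) = (\<Sum>p<2. t p) + (\<Sum>p\<in>{2..<m}. t p)"
    unfolding split by (subst sum.union_disjoint) auto
  moreover have "(\<Sum>p<2. t p) = complex_of_real (\<Omega> \<theta>) + complex_of_real (deriv \<Omega> \<theta>) * (- \<i> * complex_of_real L)"
    by (simp add: t_def eval_nat_numeral)
  ultimately have "Im (E m \<Omega> r \<theta>) + deriv \<Omega> \<theta> * L = Im (\<Sum>p\<in>{2..<m}. t p)"
    unfolding E by simp
  also have "\<bar>\<dots>\<bar> \<le> norm (\<Sum>p\<in>{2..<m}. t p)" by (rule abs_Im_le_cmod)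
  also have "\<dots> \<le> (\<Sum>p\<in>{2..<m}. norm (t p))" by (rule norm_sum)
  also have "\<dots> \<le> (\<Sum>p\<in>{2..<m}. B * \<eta> * \<bar>L\<bar>)"
  proof (rule sum_mono)
    fix p assume p: "p \<in> {2..<m}"
    have n: "norm (t p) = \<bar>(deriv ^^ p) \<Omega> \<theta>\<bar> / fact p * \<bar>L\<bar> ^ p"
      unfolding t_def by (simp add: norm_mult norm_power norm_divide)
    have "\<bar>(deriv ^^ p) \<Omega> \<theta>\<bar> / fact p \<le> \<bar>(deriv ^^ p) \<Omega> \<theta>\<bar>"
      by (simp add: divide_le_eq fact_ge_1 mult_le_cancel_left1)
    also have "\<dots> \<le> B" using B p by auto
    finally have c: "\<bar>(deriv ^^ p) \<Omega> \<theta>\<bar> / fact p \<le> B" .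
    have "\<bar>L\<bar> ^ p \<le> \<bar>L\<bar> ^ 2" using p L by (intro power_decreasing) auto
    also have "\<dots> = \<bar>L\<bar> * \<bar>L\<bar>" by (simp add: power2_eq_square)
    also have "\<dots> \<le> \<eta> * \<bar>L\<bar>" using L(1) by (rule mult_right_mono) simp
    finally have d: "\<bar>L\<bar> ^ p \<le> \<eta> * \<bar>L\<bar>" .
    have "\<bar>(deriv ^^ p) \<Omega> \<theta>\<bar> \<le> B" using B p by simp
    then have "B \<ge> 0" using abs_ge_zero[of "(deriv ^^ p) \<Omega> \<theta>"] by linarith
    have "norm (t p) \<le> B * (\<eta> * \<bar>L\<bar>)" unfolding n
      by (rule mult_mono[OF c d \<open>B \<ge> 0\<close>]) simp
    then show "norm (t p) \<le> B * \<eta> * \<bar>L\<bar>" by simp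
  qed
  also have "\<dots> = real (m - 2) * (B * \<eta> * \<bar>L\<bar>)" by simp
  also have "\<dots> \<le> real m * (B * \<eta> * \<bar>L\<bar>)"
  proof (rule mult_right_mono)
    have "0 < m" using assms(2) by simp
    then have "\<bar>(deriv ^^ 0) \<Omega> \<theta>\<bar> \<le> B" using B by blast
    then have "B \<ge> 0" using abs_ge_zero[of "(deriv ^^ 0) \<Omega> \<theta>"] by linarith
    moreover have "\<eta> \<ge> 0" using L abs_ge_zero[of L] by linarith
    ultimately show "0 \<le> B * \<eta> * \<bar>L\<bar>" by simp
  qed simp
  finally show ?thesis by (simp add: mult.assoc)
qed

theorem lemma4p8:
  fixes \<Omega> :: "real \<Rightarrow> real" and m :: nat
  assumes "m \<ge> 2"
    and "circle_fun \<Omega>"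
    and "C_k (m - 1) \<Omega>"
    and "\<And>\<theta>. deriv \<Omega> \<theta> + 1 > 0"
  shows "\<exists>\<epsilon>0 > 0. \<exists>\<mu> > 0. \<forall>\<epsilon>. 0 < \<epsilon> \<and> \<epsilon> < \<epsilon>0 \<longrightarrow>
           (\<forall>\<theta> r. 1 \<le> r \<and> r \<le> 2 powr \<epsilon> \<longrightarrow>
              norm (exp (- \<i> * E m \<Omega> r \<theta>)) \<le> r powr (1 - \<mu>)) \<and>
           (\<forall>\<theta> r. 2 powr (- \<epsilon>) \<le> r \<and> r \<le> 1 \<longrightarrow>
              norm (exp (\<i> * E m \<Omega> r \<theta>)) \<le> r powr (\<mu> - 1))"
proof -
  have per: "\<forall>x. \<Omega> (x + 2*pi) = \<Omega> x" using assms(2) unfolding circle_fun_def by simp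
  have cont: "continuous_on UNIV ((deriv ^^ p) \<Omega>)" if "p < m" for p
  proof (cases "p = m - 1")
    case True then show ?thesis using assms(3) unfolding C_k_def by simp
  next
    case False
    then have "p < m - 1" using that by simp
    then have "\<forall>x. (deriv ^^ p) \<Omega> differentiable (at x)" using assms(3) unfolding C_k_def by blast
    then show ?thesis by (simp add: continuous_at_imp_continuous_on differentiable_imp_continuous_within)
  qed
  have "\<forall>p<m. \<exists>b\<ge>0. \<forall>\<theta>. \<bar>(deriv ^^ p) \<Omega> \<theta>\<bar> \<le> b"
    using periodic_bounded[OF derivs_periodic[OF per] cont] by blast
  then have ex: "\<And>p. p < m \<Longrightarrow> \<exists>b. b \<ge> 0 \<and> (\<forall>\<theta>. \<bar>(deriv ^^ p) \<Omega> \<theta>\<bar> \<le> b)" by blast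
  define bb where "bb p = (SOME b. b \<ge> 0 \<and> (\<forall>\<theta>. \<bar>(deriv ^^ p) \<Omega> \<theta>\<bar> \<le> b))" for p
  have bb: "\<forall>p<m. bb p \<ge> 0 \<and> (\<forall>\<theta>. \<bar>(deriv ^^ p) \<Omega> \<theta>\<bar> \<le> bb p)"
    unfolding bb_def using someI_ex[OF ex] by blast
  define B where "B = (\<Sum>p<m. bb p)"
  have B: "\<forall>p<m. \<forall>\<theta>. \<bar>(deriv ^^ p) \<Omega> \<theta>\<bar> \<le> B"
  proof (intro allI impI)
    fix p \<theta> assume p: "p < m"
    have "bb p \<le> B" unfolding B_def using bb p by (intro member_le_sum) auto
    moreover have "\<bar>(deriv ^^ p) \<Omega> \<theta>\<bar> \<le> bb p" using bb p by blast
    ultimately show "\<bar>(deriv ^^ p) \<Omega> \<theta>\<bar> \<le> B" by linarith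
  qed
  have B0: "B \<ge> 0" unfolding B_def using bb by (intro sum_nonneg) auto
  have per1: "\<forall>x. deriv \<Omega> (x + 2*pi) + 1 = deriv \<Omega> x + 1"
    using derivs_periodic[OF per, of 1] by simp
  have "continuous_on UNIV (deriv \<Omega>)" using cont[of 1] assms(1) by simp
  then have c1: "continuous_on UNIV (\<lambda>x. deriv \<Omega> x + 1)" by (intro continuous_intros)
  obtain x0 where x0: "\<forall>x. deriv \<Omega> x0 + 1 \<le> deriv \<Omega> x + 1"
    using periodic_min[OF per1 c1] by blast
  define \<delta> where "\<delta> = deriv \<Omega> x0 + 1"
  have \<delta>: "\<delta> > 0" "\<And>x. \<delta> \<le> deriv \<Omega> x + 1" unfolding \<delta>_def using x0 assms(4) by auto
  define \<eta> where "\<eta> = min 1 (\<delta> / (2 * (real m * B + 1)))"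
  have mB: "real m * B + 1 > 0" using B0 by (simp add: add_nonneg_pos)
  have \<eta>: "\<eta> > 0" "\<eta> \<le> 1" unfolding \<eta>_def using \<delta> mB by auto
  have "real m * B * \<eta> \<le> real m * B * (\<delta> / (2 * (real m * B + 1)))"
    unfolding \<eta>_def using B0 by (intro mult_left_mono) auto
  also have "\<dots> = \<delta> / 2 * (real m * B / (real m * B + 1))" by (simp add: field_simps)
  also have "\<dots> \<le> \<delta> / 2 * 1" using \<delta> mB B0 by (intro mult_left_mono) auto
  finally have mBe: "real m * B * \<eta> \<le> \<delta> / 2" by simp
  have est: "\<bar>Im (E m \<Omega> r \<theta>) + deriv \<Omega> \<theta> * ln r\<bar> \<le> \<delta> / 2 * \<bar>ln r\<bar>"
    if "r > 0" "\<bar>ln r\<bar> \<le> \<eta>" for r \<theta>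
  proof -
    have "\<bar>Im (E m \<Omega> r \<theta>) + deriv \<Omega> \<theta> * ln r\<bar> \<le> real m * B * \<eta> * \<bar>ln r\<bar>"
      using key_estimate[OF B assms(1) that(2) \<eta>(2) that(1) refl] .
    also have "\<dots> \<le> \<delta> / 2 * \<bar>ln r\<bar>" using mBe by (intro mult_right_mono) auto
    finally show ?thesis .
  qed
  define \<epsilon>0 where "\<epsilon>0 = \<eta> / ln 2"
  have e0: "\<epsilon>0 > 0" unfolding \<epsilon>0_def using \<eta> by simp
  have main: "\<forall>\<epsilon>. 0 < \<epsilon> \<and> \<epsilon> < \<epsilon>0 \<longrightarrow>
           (\<forall>\<theta> r. 1 \<le> r \<and> r \<le> 2 powr \<epsilon> \<longrightarrow>
              norm (exp (- \<i> * E m \<Omega> r \<theta>)) \<le> r powr (1 - \<delta>/2)) \<and>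
           (\<forall>\<theta> r. 2 powr (- \<epsilon>) \<le> r \<and> r \<le> 1 \<longrightarrow>
              norm (exp (\<i> * E m \<Omega> r \<theta>)) \<le> r powr (\<delta>/2 - 1))"
  proof (intro allI impI conjI)
    fix \<epsilon> :: real assume eps: "0 < \<epsilon> \<and> \<epsilon> < \<epsilon>0"
    have el: "\<epsilon> * ln 2 \<le> \<eta>" using eps unfolding \<epsilon>0_def by (simp add: pos_less_divide_eq less_imp_le)
    {
      fix \<theta> r :: real assume r: "1 \<le> r \<and> r \<le> 2 powr \<epsilon>"
      have r0: "r > 0" using r by simp
      have L0: "ln r \<ge> 0" using r by simp
      have "ln r \<le> ln (2 powr \<epsilon>)" using r r0 by (subst ln_le_cancel_iff) auto
      then have "ln r \<le> \<epsilon> * ln 2" by (simp add: ln_powr)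
      then have "\<bar>ln r\<bar> \<le> \<eta>" using el L0 by simp
      have "Im (E m \<Omega> r \<theta>) \<le> - deriv \<Omega> \<theta> * ln r + \<delta> / 2 * ln r"
      proof -
        have "\<bar>Im (E m \<Omega> r \<theta>) + deriv \<Omega> \<theta> * ln r\<bar> \<le> \<delta> / 2 * ln r"
          using est[OF r0 \<open>\<bar>ln r\<bar> \<le> \<eta>\<close>, of \<theta>] abs_of_nonneg[OF L0] by simp
        then show ?thesis using abs_ge_self[of "Im (E m \<Omega> r \<theta>) + deriv \<Omega> \<theta> * ln r"] by linarith
      qed
      also have "\<dots> \<le> (1 - \<delta>/2) * ln r"
        using mult_right_mono[OF \<delta>(2)[of \<theta>] L0] by (simp add: algebra_simps)
      finally have "exp (Im (E m \<Omega> r \<theta>)) \<le> exp ((1 - \<delta>/2) * ln r)" by simp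
      then show "norm (exp (- \<i> * E m \<Omega> r \<theta>)) \<le> r powr (1 - \<delta>/2)"
        using r0 by (simp add: norm_exp_eq_Re powr_def)
    }
    {
      fix \<theta> r :: real assume r: "2 powr (- \<epsilon>) \<le> r \<and> r \<le> 1"
      have "(2::real) powr (- \<epsilon>) > 0" by simp
      then have r0: "r > 0" using r by linarith
      have L0: "ln r \<le> 0" using r r0 by simp
      have "ln (2 powr (- \<epsilon>)) \<le> ln r" using r r0 by (subst ln_le_cancel_iff) auto
      then have "- (\<epsilon> * ln 2) \<le> ln r" by (simp add: ln_powr)
      then have "\<bar>ln r\<bar> \<le> \<eta>" using el L0 by simp
      have "- Im (E m \<Omega> r \<theta>) \<le> deriv \<Omega> \<theta> * ln r - \<delta> / 2 * ln r"
      proof -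
        have "\<bar>Im (E m \<Omega> r \<theta>) + deriv \<Omega> \<theta> * ln r\<bar> \<le> \<delta> / 2 * (- ln r)"
          using est[OF r0 \<open>\<bar>ln r\<bar> \<le> \<eta>\<close>, of \<theta>] abs_of_nonpos[OF L0] by simp
        then show ?thesis using abs_ge_minus_self[of "Im (E m \<Omega> r \<theta>) + deriv \<Omega> \<theta> * ln r"] by linarith
      qed
      also have "\<dots> \<le> (\<delta>/2 - 1) * ln r"
        using mult_right_mono_neg[OF \<delta>(2)[of \<theta>] L0] by (simp add: algebra_simps)
      finally have "exp (- Im (E m \<Omega> r \<theta>)) \<le> exp ((\<delta>/2 - 1) * ln r)" by simp
      then show "norm (exp (\<i> * E m \<Omega> r \<theta>)) \<le> r powr (\<delta>/2 - 1)"
        using r0 by (simp add: norm_exp_eq_Re powr_def)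
    }
  qed
  have d2: "\<delta>/2 > 0" using \<delta>(1) by simp
  show ?thesis
    apply (rule exI[of _ \<epsilon>0])
    apply (rule conjI[OF e0])
    apply (rule exI[of _ "\<delta>/2"])
    apply (rule conjI[OF d2])
    apply (rule main)
    done
qed

end
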